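(* Let $G$ be a finite group, $A=\mathbb{C}[[z]]$ with maximal ideal $\mathfrak{m}=(z)$, and $\phi:G\to\Aut_{\mathbb{R}}(A)$ an injective group homomorphism. Then exactly one of the following holds. (a) Every $\phi_g$ is $\mathbb{C}$-linear. Then $G=\langle\varrho\mid\varrho^n=e\rangle$ is cyclic of some order $n$, and there is a local parameter $w\in\mathfrak{m}$ (generator of $\mathfrak{m}$) with $\phi_\varrho(w)=\xi w$, where $\xi=\exp(2\pi i/n)$. (b) Otherwise $G\cong D_n=\langle\sigma,\varrho\mid\sigma^2=e=\varrho^n,\ \sigma\varrho\sigma^{-1}=\varrho^{-1}\rangle$ for some $n\in\mathbb{N}$, and there is a local parameter $w\in\mathfrak{m}$ such that $\phi_\sigma(\alpha)=\bar\alpha$ for $\alpha\in\mathbb{C}$, $\phi_\sigma(w)=w$, $\phi_\varrho(\alpha)=\alpha$ for $\alpha\in\mathbb{C}$, and $\phi_\varrho(w)=\xi w$ with $\xi=\exp(2\pi i/n)$. *)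

theory Defs
  imports Complex_Main "HOL-Computational_Algebra.Formal_Power_Series" "HOL-Algebra.Generated_Groups"
begin

text \<open>A = C[[z]] is modelled as the type complex fps.
  An element of Aut_R(A): a bijective ring endomorphism of C[[z]] which is R-linear.\<close>
definition real_fps_aut :: "(complex fps \<Rightarrow> complex fps) \<Rightarrow> bool" where
  "real_fps_aut f \<longleftrightarrow> bij f
     \<and> (\<forall>a b. f (a + b) = f a + f b)
     \<and> (\<forall>a b. f (a * b) = f a * f b)
     \<and> f 1 = 1
     \<and> (\<forall>r a. f (fps_const (complex_of_real r) * a) = fps_const (complex_of_real r) * f a)"

definition complex_linear_fps :: "(complex fps \<Rightarrow> complex fps) \<Rightarrow> bool" where
  "complex_linear_fps f \<longleftrightarrow> (\<forall>c a. f (fps_const c * a) = fps_const c * f a)"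

definition fps_max_ideal :: "complex fps set" where
  "fps_max_ideal = {a. fps_nth a 0 = 0}"

definition local_parameter :: "complex fps \<Rightarrow> bool" where
  "local_parameter w \<longleftrightarrow> w \<in> fps_max_ideal \<and> {w * a | a. True} = fps_max_ideal"

end

theory Submission
  imports Defs "HOL-Algebra.Multiplicative_Group"
begin

unbundle fps_syntax

definition cid :: "(complex fps \<Rightarrow> complex fps) \<Rightarrow> bool" where
  "cid f \<longleftrightarrow> (\<forall>c. f (fps_const c) = fps_const c)"

definition Ef :: "(complex fps \<Rightarrow> complex fps) \<Rightarrow> complex \<Rightarrow> complex" where
  "Ef f c = (if cid f then c else cnj c)"

lemma aut_add: "real_fps_aut f \<Longrightarrow> f (a + b) = f a + f b"
  and aut_mult: "real_fps_aut f \<Longrightarrow> f (a * b) = f a * f b"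
  and aut_one: "real_fps_aut f \<Longrightarrow> f 1 = 1"
  and aut_bij: "real_fps_aut f \<Longrightarrow> bij f"
  and aut_rlin: "real_fps_aut f \<Longrightarrow> f (fps_const (complex_of_real r) * a) = fps_const (complex_of_real r) * f a"
  unfolding real_fps_aut_def by auto

lemma aut_zero: "real_fps_aut f \<Longrightarrow> f 0 = 0"
  using aut_add[of f 0 0] by simp

lemma aut_uminus: "real_fps_aut f \<Longrightarrow> f (- a) = - f a"
  using aut_add[of f a "-a"] aut_zero[of f] by (simp add: add.inverse_unique)

lemma aut_diff: "real_fps_aut f \<Longrightarrow> f (a - b) = f a - f b"
  using aut_add[of f a "-b"] aut_uminus[of f b] by simp

lemma aut_const: assumes f: "real_fps_aut f" shows "f (fps_const c) = fps_const (Ef f c)"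
proof -
  define x where "x = f (fps_const \<i>)"
  have "x * x = f (fps_const \<i> * fps_const \<i>)" unfolding x_def by (rule aut_mult[OF f, symmetric])
  also have ii: "fps_const \<i> * fps_const \<i> = (- 1 :: complex fps)"
  proof -
    have "fps_const \<i> * fps_const \<i> = fps_const (\<i> * \<i>)" by (simp only: fps_const_mult)
    also have "\<dots> = fps_const (- 1)" by simp
    also have "\<dots> = - 1" by (simp only: fps_const_neg[symmetric] fps_const_1_eq_1)
    finally show ?thesis .
  qed
  finally have xx: "x * x = -1" using aut_uminus[OF f] aut_one[OF f] by simp
  have "(x - fps_const \<i>) * (x + fps_const \<i>) = x * x + fps_const \<i> * x - fps_const \<i> * x - fps_const \<i> * fps_const \<i>"
    by (simp add: algebra_simps)
  also have "\<dots> = 0" using xx ii by simp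
  finally have "x - fps_const \<i> = 0 \<or> x + fps_const \<i> = 0" by simp
  then have "x = fps_const \<i> \<or> x = - fps_const \<i>"
    by (metis eq_neg_iff_add_eq_0 right_minus_eq)
  have gen: "f (fps_const d) = fps_const (complex_of_real (Re d)) + fps_const (complex_of_real (Im d)) * x" for d
  proof -
    have e: "d = complex_of_real (Re d) + complex_of_real (Im d) * \<i>" by (simp add: complex_eq_iff)
    have "fps_const d = fps_const (complex_of_real (Re d) + complex_of_real (Im d) * \<i>)"
      using e by (rule arg_cong)
    also have "\<dots> = fps_const (complex_of_real (Re d)) * 1 + fps_const (complex_of_real (Im d)) * fps_const \<i>"
      by (simp only: fps_const_add fps_const_mult mult_1_right)
    finally have "fps_const d = fps_const (complex_of_real (Re d)) * 1 + fps_const (complex_of_real (Im d)) * fps_const \<i>" .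
    then have "f (fps_const d) = f (fps_const (complex_of_real (Re d)) * 1) + f (fps_const (complex_of_real (Im d)) * fps_const \<i>)"
      by (simp only: aut_add[OF f])
    then show ?thesis by (simp only: aut_rlin[OF f] aut_one[OF f] x_def) simp
  qed
  show ?thesis
  proof (cases "x = fps_const \<i>")
    case True
    have "f (fps_const d) = fps_const d" for d
    proof -
      have "complex_of_real (Re d) + complex_of_real (Im d) * \<i> = d" by (simp add: complex_eq_iff)
      then show ?thesis unfolding gen True by (simp only: fps_const_add fps_const_mult)
    qed
    then have "cid f" by (simp add: cid_def)
    then show ?thesis by (simp add: Ef_def cid_def)
  next
    case False
    then have x: "x = fps_const (- \<i>)" using \<open>x = _ \<or> _\<close> by auto
    have cn: "f (fps_const d) = fps_const (cnj d)" for d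
    proof -
      have "complex_of_real (Re d) + complex_of_real (Im d) * (- \<i>) = cnj d"
        by (simp add: complex_eq_iff)
      then show ?thesis unfolding gen x by (simp only: fps_const_add fps_const_mult)
    qed
    have "\<not> cid f"
    proof
      assume "cid f"
      then have "fps_const (- \<i>) = (fps_const \<i> :: complex fps)" using cn[of \<i>] by (simp add: cid_def)
      then have "(fps_const (- \<i>) :: complex fps) $ 0 = fps_const \<i> $ 0" by simp
      then show False by (simp add: complex_eq_iff)
    qed
    then show ?thesis using cn by (simp add: Ef_def)
  qed
qed

lemma aut_X0: assumes f: "real_fps_aut f" shows "f fps_X $ 0 = 0"
proof (rule ccontr)
  assume h: "f fps_X $ 0 \<noteq> 0"
  obtain b where b: "f b = inverse (f fps_X)" using aut_bij[OF f] by (metis bij_pointE)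
  have "f (fps_X * b) = f 1" using aut_mult[OF f] aut_one[OF f] b h by (simp add: inverse_mult_eq_1')
  then have "fps_X * b = 1" using aut_bij[OF f] by (simp add: bij_def inj_eq)
  then have "(fps_X * b) $ 0 = (1::complex fps) $ 0" by simp
  then show False by simp
qed

lemma fps_decomp01: fixes a :: "complex fps" shows "a = fps_const (a$0) + fps_X * (fps_const (a$1) + fps_X * fps_shift 2 a)"
proof (rule fps_ext)
  fix n show "a $ n = (fps_const (a$0) + fps_X * (fps_const (a$1) + fps_X * fps_shift 2 a)) $ n"
    by (cases n; cases "n - 1") (auto simp: fps_X_mult_nth numeral_2_eq_2)
qed

lemma aut_nth01: assumes f: "real_fps_aut f"
  shows "f a $ 0 = Ef f (a$0)" "f a $ 1 = Ef f (a$1) * f fps_X $ 1"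
proof -
  have "f a = fps_const (Ef f (a$0)) + f fps_X * (fps_const (Ef f (a$1)) + f fps_X * f (fps_shift 2 a))"
    by (subst fps_decomp01) (simp add: aut_add[OF f] aut_mult[OF f] aut_const[OF f])
  then show "f a $ 0 = Ef f (a$0)" "f a $ 1 = Ef f (a$1) * f fps_X $ 1"
    using aut_X0[OF f] by (simp_all add: fps_mult_nth_1)
qed

lemma param_decomp: fixes w b :: "complex fps" assumes "w $ 0 = 0" "w $ 1 \<noteq> 0" "b $ 0 = 0" shows "\<exists>b'. b = w * b'"
proof -
  have w: "w = fps_shift 1 w * fps_X" by (rule fps_ext) (use assms in \<open>auto simp: fps_X_mult_right_nth\<close>)
  have b: "b = fps_shift 1 b * fps_X" by (rule fps_ext) (use assms in \<open>auto simp: fps_X_mult_right_nth\<close>)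
  have u: "fps_shift 1 w * inverse (fps_shift 1 w) = 1" using assms by (intro inverse_mult_eq_1') simp
  have "b = w * (fps_shift 1 b * inverse (fps_shift 1 w))"
    by (subst b, subst w) (metis (no_types, lifting) u mult.assoc mult.commute mult_1)
  then show ?thesis by blast
qed

lemma local_param: fixes w :: "complex fps" assumes "w $ 0 = 0" "w $ 1 \<noteq> 0" shows "local_parameter w"
  unfolding local_parameter_def fps_max_ideal_def
  using assms param_decomp[OF assms] by auto

lemma aut_sum: assumes f: "real_fps_aut f" shows "f (\<Sum>k\<in>A. g k) = (\<Sum>k\<in>A. f (g k))"
proof (cases "finite A")
  case True then show ?thesis
    by (induction A rule: finite_induct) (simp_all add: aut_zero[OF f] aut_add[OF f])
qed (simp add: aut_zero[OF f])

lemma aut_fix: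
  fixes w :: "complex fps"
  assumes f: "real_fps_aut f" and c: "cid f" and fw: "f w = w" and w0: "w $ 0 = 0" and w1: "w $ 1 \<noteq> 0"
  shows "f a = a"
proof -
  have key: "\<exists>b. f a - a = w ^ K * (f b - b)" for K
  proof (induction K)
    case 0 then show ?case by auto
  next
    case (Suc K)
    then obtain b where b: "f a - a = w ^ K * (f b - b)" by blast
    have "(b - fps_const (b$0)) $ 0 = 0" by simp
    then obtain b' where b': "b - fps_const (b$0) = w * b'" using param_decomp[OF w0 w1] by blast
    have bb: "b = fps_const (b$0) + w * b'" using b' by (simp add: algebra_simps)
    have "f b - b = f (fps_const (b$0)) + f w * f b' - (fps_const (b$0) + w * b')"
      by (subst (1 2) bb) (simp add: aut_add[OF f] aut_mult[OF f])
    also have "\<dots> = w * (f b' - b')" using c fw by (simp add: cid_def algebra_simps)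
    finally show ?case using b by (intro exI[of _ b']) (simp add: mult.assoc)
  qed
  show ?thesis
  proof (rule fps_ext)
    fix j
    obtain b where b: "f a - a = w ^ Suc j * (f b - b)" using key by blast
    have w: "w = fps_X * fps_shift 1 w" by (rule fps_ext) (use w0 in auto)
    have "w ^ Suc j * (f b - b) = fps_X ^ Suc j * (fps_shift 1 w ^ Suc j * (f b - b))"
      by (subst w) (simp add: power_mult_distrib mult.assoc)
    then have "(f a - a) = fps_X ^ Suc j * (fps_shift 1 w ^ Suc j * (f b - b))" using b by simp
    then have "(f a - a) $ j = 0" by (simp only: fps_X_power_mult_nth) simp
    then show "f a $ j = a $ j" by simp
  qed
qed

lemma clin_iff: assumes f: "real_fps_aut f" shows "complex_linear_fps f \<longleftrightarrow> cid f"
proof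
  assume "complex_linear_fps f"
  then show "cid f" unfolding complex_linear_fps_def cid_def
    by (metis aut_one[OF f] mult_1_right)
next
  assume "cid f"
  then show "complex_linear_fps f" unfolding complex_linear_fps_def cid_def
    by (simp add: aut_mult[OF f])
qed

lemma Ef_cases: "Ef f c = c \<or> Ef f c = cnj c" by (simp add: Ef_def)

lemma sum_shift_cyc: "h n = h 0 \<Longrightarrow> (\<Sum>k<n. h (Suc k)) = (\<Sum>k<n. h k)"
  for h :: "nat \<Rightarrow> 'a::comm_monoid_add"
proof (cases n)
  case (Suc m)
  assume h: "h n = h 0"
  have "(\<Sum>k<n. h (Suc k)) = (\<Sum>k<m. h (Suc k)) + h (Suc m)" using Suc by simp
  also have "\<dots> = h 0 + (\<Sum>k<m. h (Suc k))" using Suc h by (simp add: add.commute)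
  also have "\<dots> = (\<Sum>k<n. h k)" using Suc by (simp only: sum.lessThan_Suc_shift)
  finally show ?thesis .
qed simp


locale P6 = group G for G (structure) +
  fixes \<phi> :: "'a \<Rightarrow> complex fps \<Rightarrow> complex fps"
  assumes fin: "finite (carrier G)"
    and aut: "\<And>g. g \<in> carrier G \<Longrightarrow> real_fps_aut (\<phi> g)"
    and hom: "\<And>g h. g \<in> carrier G \<Longrightarrow> h \<in> carrier G \<Longrightarrow> \<phi> (g \<otimes> h) = \<phi> g \<circ> \<phi> h"
    and inj: "inj_on \<phi> (carrier G)"
begin

definition L :: "'a \<Rightarrow> complex" where "L g = \<phi> g fps_X $ 1"
definition lin :: "'a \<Rightarrow> bool" where "lin g \<longleftrightarrow> cid (\<phi> g)"

lemma phi_app: "g \<in> carrier G \<Longrightarrow> h \<in> carrier G \<Longrightarrow> \<phi> (g \<otimes> h) x = \<phi> g (\<phi> h x)"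
  using hom by simp

lemma phi_one: "\<phi> \<one> x = x"
proof -
  have "\<phi> \<one> (\<phi> \<one> x) = \<phi> \<one> x" using phi_app[of \<one> \<one> x] by simp
  then show ?thesis using aut_bij[OF aut[of \<one>]] by (simp add: bij_def inj_eq)
qed

lemma phi_one': "\<phi> \<one> = id" using phi_one by auto

lemma Ef_mult: "g \<in> carrier G \<Longrightarrow> h \<in> carrier G \<Longrightarrow> Ef (\<phi> (g \<otimes> h)) c = Ef (\<phi> g) (Ef (\<phi> h) c)"
proof -
  assume g: "g \<in> carrier G" and h: "h \<in> carrier G"
  have "fps_const (Ef (\<phi> (g \<otimes> h)) c) = fps_const (Ef (\<phi> g) (Ef (\<phi> h) c))"
    using phi_app[OF g h] aut_const aut g h by (metis m_closed)
  then have "fps_const (Ef (\<phi> (g \<otimes> h)) c) $ 0 = (fps_const (Ef (\<phi> g) (Ef (\<phi> h) c)) :: complex fps) $ 0"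
    by (rule arg_cong)
  then show ?thesis by simp
qed

lemma lin_Ef: "lin g \<longleftrightarrow> Ef (\<phi> g) \<i> = \<i>"
  by (auto simp: lin_def Ef_def complex_eq_iff)

lemma Ef_lin: "lin g \<Longrightarrow> Ef (\<phi> g) c = c" by (simp add: lin_def Ef_def)
lemma Ef_nlin: "\<not> lin g \<Longrightarrow> Ef (\<phi> g) c = cnj c" by (simp add: lin_def Ef_def)

lemma lin_mult: "g \<in> carrier G \<Longrightarrow> h \<in> carrier G \<Longrightarrow> lin (g \<otimes> h) \<longleftrightarrow> (lin g \<longleftrightarrow> lin h)"
  unfolding lin_Ef Ef_mult by (auto simp: Ef_def complex_eq_iff)

lemma lin_one: "lin \<one>" by (simp add: lin_def cid_def phi_one)

lemma lin_inv: "g \<in> carrier G \<Longrightarrow> lin (inv g) \<longleftrightarrow> lin g"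
  using lin_mult[of g "inv g"] lin_one by auto

lemma L_mult: "g \<in> carrier G \<Longrightarrow> h \<in> carrier G \<Longrightarrow> L (g \<otimes> h) = Ef (\<phi> g) (L h) * L g"
  unfolding L_def using aut_nth01(2)[OF aut, of g "\<phi> h fps_X"] by (simp add: phi_app)

lemma L_one: "L \<one> = 1" by (simp add: L_def phi_one)

lemma L_nz: assumes "g \<in> carrier G" shows "L g \<noteq> 0"
proof
  assume "L g = 0"
  have "L (g \<otimes> inv g) = Ef (\<phi> g) (L (inv g)) * L g" using assms by (intro L_mult) simp_all
  then have "L (g \<otimes> inv g) = 0" using \<open>L g = 0\<close> by simp
  then show False using assms by (simp add: L_one)
qed

lemma lin_pow: "g \<in> carrier G \<Longrightarrow> lin g \<Longrightarrow> lin (g [^] (k::nat)) \<and> L (g [^] k) = L g ^ k"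
proof (induction k)
  case 0 then show ?case by (simp add: lin_one L_one)
next
  case (Suc k)
  then show ?case by (simp add: nat_pow_Suc2 lin_mult L_mult Ef_lin)
qed

lemma Ef_zero: "Ef f 0 = 0" by (simp add: Ef_def)

lemma triv: assumes g: "g \<in> carrier G" and l: "lin g" and L1: "L g = 1" shows "g = \<one>"
proof -
  define N where "N = order G"
  define w where "w = (\<Sum>k<N. \<phi> (g [^] k) fps_X)"
  have N: "N \<ge> 1" using fin unfolding N_def order_def
    by (metis One_nat_def Suc_leI card_gt_0_iff empty_iff one_closed)
  have gN: "g [^] N = \<one>" unfolding N_def using pow_order_eq_1[OF g] .
  have "\<phi> g w = (\<Sum>k<N. \<phi> g (\<phi> (g [^] k) fps_X))" unfolding w_def by (rule aut_sum[OF aut[OF g]])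
  also have "\<dots> = (\<Sum>k<N. \<phi> (g [^] Suc k) fps_X)"
  proof (rule sum.cong)
    fix k assume "k \<in> {..<N}"
    have "g [^] Suc k = g \<otimes> g [^] k" using g by (rule nat_pow_Suc2)
    then show "\<phi> g (\<phi> (g [^] k) fps_X) = \<phi> (g [^] Suc k) fps_X" using g by (simp only: phi_app nat_pow_closed)
  qed simp
  also have "\<dots> = w" unfolding w_def by (rule sum_shift_cyc) (simp add: gN)
  finally have fw: "\<phi> g w = w" .
  have w0: "w $ 0 = 0" unfolding w_def fps_sum_nth
    by (simp add: aut_nth01(1)[OF aut] g Ef_zero)
  have "w $ 1 = (\<Sum>k<N. L (g [^] k))" unfolding w_def fps_sum_nth L_def by simp
  also have "\<dots> = of_nat N" using lin_pow[OF g l] L1 by simp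
  finally have w1: "w $ 1 \<noteq> 0" using N by simp
  have "\<phi> g x = x" for x using aut_fix[OF aut[OF g] _ fw w0 w1] l by (simp add: lin_def)
  then have "\<phi> g = \<phi> \<one>" using phi_one by auto
  then show ?thesis using inj g by (simp add: inj_on_def)
qed

lemma L_inj: assumes g: "g \<in> carrier G" and h: "h \<in> carrier G" and "lin g" "lin h" "L g = L h"
  shows "g = h"
proof -
  have "L (h \<otimes> inv h) = 1" using h by (simp add: L_one)
  moreover have "L (h \<otimes> inv h) = Ef (\<phi> h) (L (inv h)) * L h" using h by (intro L_mult) simp_all
  ultimately have hi: "L (inv h) * L h = 1" using assms by (simp add: Ef_lin)
  have "L (g \<otimes> inv h) = L (inv h) * L g" using g h assms by (simp add: L_mult Ef_lin)
  also have "\<dots> = 1" using hi assms by simp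
  finally have "g \<otimes> inv h = \<one>" using g h assms by (intro triv) (simp_all add: lin_mult lin_inv)
  then show ?thesis using g h by (metis inv_equality inv_inv inv_closed)
qed


definition H :: "'a set" where "H = {g \<in> carrier G. lin g}"
definition nH :: nat where "nH = card H"
definition xi :: complex where "xi = cis (2 * pi / real nH)"

lemma H_fin: "finite H" using fin by (simp add: H_def)
lemma nH_pos: "nH \<ge> 1"
proof -
  have "\<one> \<in> H" by (simp add: H_def lin_one)
  then show ?thesis using H_fin unfolding nH_def by (metis One_nat_def Suc_leI card_gt_0_iff empty_iff)
qed

lemma H_mult: "g \<in> H \<Longrightarrow> h \<in> H \<Longrightarrow> g \<otimes> h \<in> H \<and> L (g \<otimes> h) = L g * L h"
  by (simp add: H_def lin_mult L_mult Ef_lin)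

lemma L_inj_H: "inj_on L H" by (auto simp: inj_on_def H_def intro: L_inj)

lemma Lam_card: "card (L ` H) = nH" by (simp add: card_image[OF L_inj_H] nH_def)

lemma roots: assumes x: "x \<in> L ` H" shows "x ^ nH = 1"
proof -
  define Lam where "Lam = L ` H"
  have finL: "finite Lam" using H_fin by (simp add: Lam_def)
  obtain g where g: "g \<in> H" "x = L g" using x by auto
  have x0: "x \<noteq> 0" using g L_nz by (auto simp: H_def)
  have sub: "(\<lambda>y. x * y) ` Lam \<subseteq> Lam"
  proof
    fix z assume "z \<in> (\<lambda>y. x * y) ` Lam"
    then obtain h where h: "h \<in> H" "z = x * L h" by (auto simp: Lam_def)
    then have "z = L (g \<otimes> h)" using H_mult[OF g(1) h(1)] g by simp
    then show "z \<in> Lam" using H_mult[OF g(1) h(1)] unfolding Lam_def by (metis image_eqI)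
  qed
  have injx: "inj_on (\<lambda>y. x * y) Lam" using x0 by (auto simp: inj_on_def)
  have eq: "(\<lambda>y. x * y) ` Lam = Lam"
    using card_image[OF injx] sub finL by (intro card_subset_eq) auto
  have "prod id Lam = prod id ((\<lambda>y. x * y) ` Lam)" using eq by simp
  also have "\<dots> = (\<Prod>y\<in>Lam. x * y)" using prod.reindex[OF injx] by simp
  also have "\<dots> = x ^ card Lam * prod id Lam" by (simp add: prod.distrib)
  finally have "x ^ card Lam * prod id Lam = 1 * prod id Lam" by simp
  moreover have "prod id Lam \<noteq> 0" using finL L_nz by (auto simp: Lam_def H_def)
  ultimately have "x ^ card Lam = 1" by (metis mult_right_cancel)
  then show ?thesis using Lam_card by (simp add: Lam_def)
qed

lemma Lam_eq: "L ` H = {z. z ^ nH = 1}"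
proof (rule card_subset_eq)
  show "finite {z::complex. z ^ nH = 1}" using nH_pos by (rule finite_roots_unity)
  show "L ` H \<subseteq> {z. z ^ nH = 1}" using roots by auto
  show "card (L ` H) = card {z::complex. z ^ nH = 1}" using nH_pos by (simp add: Lam_card card_roots_unity_eq)
qed

lemma xi_exp: "exp (2 * pi * \<i> / of_nat nH) = xi"
  unfolding xi_def cis_conv_exp by (simp add: field_simps)

lemma xi_pow: "xi ^ k = cis (2 * pi * real k / real nH)"
  unfolding xi_def DeMoivre by (simp add: field_simps)

lemma xi_n: "xi ^ nH = 1" using nH_pos unfolding xi_pow by simp

lemma xi_cnj: "xi * cnj xi = 1" unfolding xi_def by (simp add: cis_cnj cis_mult)
lemma xi_cnj': "cnj xi * xi = 1" using xi_cnj by (simp add: mult.commute)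

lemma xi_inj: "inj_on (\<lambda>k. xi ^ k) {..<nH}"
  using bij_betw_imp_inj_on[OF bij_betw_roots_unity] nH_pos unfolding xi_pow by simp

lemma xi_in: "xi \<in> L ` H" unfolding Lam_eq using xi_n by simp

definition rho :: 'a where "rho = (SOME r. r \<in> H \<and> L r = xi)"

lemma rho: "rho \<in> H" "L rho = xi"
proof -
  have "\<exists>r. r \<in> H \<and> L r = xi" using xi_in by auto
  then have "rho \<in> H \<and> L rho = xi" unfolding rho_def by (rule someI_ex)
  then show "rho \<in> H" "L rho = xi" by auto
qed

lemma rho_c: "rho \<in> carrier G" "lin rho" using rho(1) by (auto simp: H_def)

lemma rho_pow: "rho [^] (k::nat) \<in> H" "L (rho [^] k) = xi ^ k"
  using lin_pow[OF rho_c, of k] rho(2) rho_c by (auto simp: H_def)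

lemma rho_n: "rho [^] nH = \<one>"
  using rho_pow[of nH] xi_n by (intro triv) (auto simp: H_def)

lemma H_eq: "H = (\<lambda>k. rho [^] k) ` {..<nH}"
proof -
  have inj1: "inj_on (\<lambda>k. rho [^] k) {..<nH}"
  proof (rule inj_onI)
    fix j k assume "j \<in> {..<nH}" "k \<in> {..<nH}" "rho [^] j = rho [^] (k::nat)"
    then show "j = k" using xi_inj rho_pow(2)[of j] rho_pow(2)[of k] by (metis inj_on_eq_iff)
  qed
  show ?thesis
  proof (rule sym, rule card_subset_eq[OF H_fin])
    show "(\<lambda>k. rho [^] k) ` {..<nH} \<subseteq> H" using rho_pow by auto
    show "card ((\<lambda>k. rho [^] k) ` {..<nH}) = card H" using card_image[OF inj1] by (simp add: nH_def)
  qed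
qed

definition w0 :: "complex fps" where
  "w0 = (\<Sum>k<nH. fps_const (cnj xi ^ k) * \<phi> (rho [^] k) fps_X)"

lemma w0_rho: "\<phi> rho w0 = fps_const xi * w0"
proof -
  define T where "T k = fps_const (cnj xi ^ k) * \<phi> (rho [^] k) fps_X" for k
  have ar: "real_fps_aut (\<phi> rho)" using aut rho_c by simp
  have "\<phi> rho w0 = (\<Sum>k<nH. \<phi> rho (T k))" unfolding w0_def T_def by (rule aut_sum[OF ar])
  also have "\<dots> = (\<Sum>k<nH. fps_const xi * T (Suc k))"
  proof (rule sum.cong)
    fix k
    have e: "rho [^] Suc k = rho \<otimes> rho [^] k" using rho_c by (simp only: nat_pow_Suc2)
    have "\<phi> rho (T k) = fps_const (cnj xi ^ k) * \<phi> (rho [^] Suc k) fps_X"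
      unfolding T_def e using rho_c
      by (simp add: aut_mult[OF ar] aut_const[OF ar] Ef_lin phi_app)
    also have "\<dots> = fps_const xi * T (Suc k)"
    proof -
      have xx: "fps_const xi * fps_const (cnj xi) = (1::complex fps)"
        by (simp only: fps_const_mult xi_cnj fps_const_1_eq_1)
      have c: "fps_const (cnj xi ^ Suc k) = fps_const (cnj xi) * fps_const (cnj xi ^ k)"
        by (simp only: power_Suc fps_const_mult)
      show ?thesis unfolding T_def c by (simp add: mult.assoc[symmetric] xx xi_cnj)
    qed
    finally show "\<phi> rho (T k) = fps_const xi * T (Suc k)" .
  qed simp
  also have "\<dots> = fps_const xi * (\<Sum>k<nH. T (Suc k))" by (simp add: sum_distrib_left)
  also have "(\<Sum>k<nH. T (Suc k)) = (\<Sum>k<nH. T k)"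
  proof (rule sum_shift_cyc)
    have "cnj xi ^ nH = 1" using xi_n by (metis complex_cnj_one complex_cnj_power)
    then show "T nH = T 0" unfolding T_def by (simp add: rho_n phi_one)
  qed
  finally show ?thesis unfolding w0_def T_def .
qed

lemma w0_0: "w0 $ 0 = 0"
  unfolding w0_def fps_sum_nth using rho_pow(1)
  by (simp add: aut_nth01(1)[OF aut] Ef_zero H_def)

lemma w0_1: "w0 $ 1 = of_nat nH"
proof -
  have "w0 $ 1 = (\<Sum>k<nH. cnj xi ^ k * L (rho [^] k))" unfolding w0_def fps_sum_nth L_def by simp
  also have "\<dots> = (\<Sum>k<nH. 1)" using rho_pow(2) by (simp add: power_mult_distrib[symmetric] xi_cnj')
  finally show ?thesis by simp
qed


lemma rho_gen: "{s, rho} \<subseteq> S \<Longrightarrow> rho [^] (k::nat) \<in> generate G S"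
proof (induction k)
  case 0 then show ?case by (simp add: generate.one)
next
  case (Suc k)
  have r: "rho \<in> generate G S" using Suc.prems by (intro generate.incl) auto
  have "rho [^] k \<otimes> rho \<in> generate G S" by (rule generate.eng[OF Suc.IH[OF Suc.prems] r])
  then show ?case by simp
qed

lemma caseA: assumes all: "\<forall>g\<in>carrier G. lin g"
  shows "\<exists>n::nat. \<exists>\<rho>\<in>carrier G. \<exists>w. n \<ge> 1 \<and> order G = n \<and> generate G {\<rho>} = carrier G \<and> \<rho> [^] n = \<one> \<and>
              local_parameter w \<and> \<phi> \<rho> w = fps_const (exp (2 * pi * \<i> / of_nat n)) * w"
proof (intro exI bexI conjI)
  have HC: "H = carrier G" using all by (auto simp: H_def)
  show "nH \<ge> 1" by (rule nH_pos)
  show "order G = nH" by (simp add: order_def nH_def HC)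
  show "generate G {rho} = carrier G"
  proof
    show "generate G {rho} \<subseteq> carrier G" using rho_c by (intro generate_incl) auto
    show "carrier G \<subseteq> generate G {rho}" unfolding HC[symmetric] H_eq using rho_gen[of rho "{rho}"] by blast
  qed
  show "rho [^] nH = \<one>" by (rule rho_n)
  show "local_parameter w0" using w0_0 w0_1 nH_pos by (intro local_param) auto
  show "\<phi> rho w0 = fps_const (exp (2 * pi * \<i> / of_nat nH)) * w0" unfolding xi_exp by (rule w0_rho)
  show "rho \<in> carrier G" by (rule rho_c)
qed

lemma norm_Lam: "x \<in> L ` H \<Longrightarrow> norm x = 1"
proof -
  assume "x \<in> L ` H"
  then have "x ^ nH = 1" using roots by blast
  then have "norm (x ^ nH) = 1" by simp
  then have nn: "norm x ^ nH = 1 ^ nH" by (simp only: norm_power power_one)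
  have "0 < nH" using nH_pos by simp
  then show "norm x = 1" using power_eq_imp_eq_base[OF nn] by simp
qed

lemma caseB: assumes sc: "s \<in> carrier G" and sl: "\<not> lin s"
  shows "\<exists>n::nat. \<exists>\<sigma>\<in>carrier G. \<exists>\<rho>\<in>carrier G. \<exists>w.
              n \<ge> 1 \<and> order G = 2 * n \<and> generate G {\<sigma>, \<rho>} = carrier G \<and>
              \<sigma> [^] (2::nat) = \<one> \<and> \<rho> [^] n = \<one> \<and>
              \<sigma> \<otimes> \<rho> \<otimes> inv \<sigma> = inv \<rho> \<and>
              local_parameter w \<and>
              (\<forall>\<alpha>. \<phi> \<sigma> (fps_const \<alpha>) = fps_const (cnj \<alpha>)) \<and> \<phi> \<sigma> w = w \<and>
              (\<forall>\<alpha>. \<phi> \<rho> (fps_const \<alpha>) = fps_const \<alpha>) \<and>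
              \<phi> \<rho> w = fps_const (exp (2 * pi * \<i> / of_nat n)) * w"
proof -
  have ssH: "s \<otimes> s \<in> H" using sc sl by (simp add: H_def lin_mult)
  have Lss: "L (s \<otimes> s) = cnj (L s) * L s" using sc sl by (simp add: L_mult Ef_nlin)
  have e: "cnj (L s) * L s = complex_of_real ((norm (L s))\<^sup>2)"
    by (subst mult.commute) (rule complex_norm_square[symmetric])
  have "L (s \<otimes> s) \<in> L ` H" using ssH by (rule imageI)
  then have "norm (L (s \<otimes> s)) = 1" by (rule norm_Lam)
  then have "norm (complex_of_real ((norm (L s))\<^sup>2)) = 1" unfolding Lss e .
  then have "\<bar>(norm (L s))\<^sup>2\<bar> = 1" unfolding norm_of_real .
  then have h: "(norm (L s))\<^sup>2 = 1" by simp
  have ls1: "cnj (L s) * L s = 1" unfolding e by (simp only: h of_real_1)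
  have ss: "s \<otimes> s = \<one>" using ssH Lss ls1 by (intro triv) (auto simp: H_def)
  have s2: "s [^] (2::nat) = \<one>" using ss sc by (simp add: numeral_2_eq_2)
  have invs: "inv s = s" using ss sc by (intro inv_equality) auto
  have rc: "rho \<in> carrier G" "lin rho" by (rule rho_c)+
  have Linv: "L (inv rho) = cnj xi"
  proof -
    have "L (rho \<otimes> inv rho) = Ef (\<phi> rho) (L (inv rho)) * L rho" using rc by (intro L_mult) simp_all
    then have "L (rho \<otimes> inv rho) = L (inv rho) * xi" using rc by (simp only: Ef_lin rho(2))
    then have "L (inv rho) * xi = 1" using rc by (simp add: L_one)
    then have "L (inv rho) * (xi * cnj xi) = cnj xi" by (metis mult.assoc mult_1)
    then show ?thesis by (simp add: xi_cnj)
  qed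
  have conj: "s \<otimes> rho \<otimes> inv s = inv rho"
  proof -
    have srl: "\<not> lin (s \<otimes> rho)" using sc sl rc by (simp add: lin_mult)
    have "L (s \<otimes> rho \<otimes> s) = cnj (L s) * (cnj xi * L s)"
      using sc rc srl sl by (simp add: L_mult Ef_nlin rho(2))
    also have "\<dots> = cnj xi" using ls1 by (metis mult.left_commute mult_1_right)
    finally have "L (s \<otimes> rho \<otimes> s) = L (inv rho)" using Linv by simp
    moreover have "lin (s \<otimes> rho \<otimes> s)" using sc sl rc srl by (simp add: lin_mult)
    ultimately have "s \<otimes> rho \<otimes> s = inv rho" using sc rc
      by (intro L_inj) (simp_all add: lin_inv)
    then show ?thesis using invs by simp
  qed
  have rs: "rho \<otimes> s = s \<otimes> inv rho"
  proof -
    have "s \<otimes> inv rho = s \<otimes> (s \<otimes> rho \<otimes> s)" using conj invs by simp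
    also have "\<dots> = (s \<otimes> s) \<otimes> (rho \<otimes> s)" using sc rc by (simp add: m_assoc)
    also have "\<dots> = rho \<otimes> s" using ss sc rc by simp
    finally show ?thesis by simp
  qed
  have carr: "carrier G = H \<union> (\<lambda>h. s \<otimes> h) ` H"
  proof
    show "H \<union> (\<lambda>h. s \<otimes> h) ` H \<subseteq> carrier G" using sc by (auto simp: H_def)
    show "carrier G \<subseteq> H \<union> (\<lambda>h. s \<otimes> h) ` H"
    proof
      fix g assume g: "g \<in> carrier G"
      show "g \<in> H \<union> (\<lambda>h. s \<otimes> h) ` H"
      proof (cases "lin g")
        case True then show ?thesis using g by (simp add: H_def)
      next
        case False
        then have "s \<otimes> g \<in> H" using g sc sl by (simp add: H_def lin_mult)
        moreover have "g = s \<otimes> (s \<otimes> g)" using g sc ss by (simp add: m_assoc[symmetric])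
        ultimately show ?thesis by blast
      qed
    qed
  qed
  have disj: "H \<inter> (\<lambda>h. s \<otimes> h) ` H = {}" using sc sl by (auto simp: H_def lin_mult)
  have injs: "inj_on (\<lambda>h. s \<otimes> h) H" using sc by (auto simp: inj_on_def H_def)
  have ord: "order G = 2 * nH" unfolding order_def
    by (subst carr, subst card_Un_disjoint) (simp_all add: H_fin disj card_image[OF injs] nH_def)
  have gen: "generate G {s, rho} = carrier G"
  proof
    show "generate G {s, rho} \<subseteq> carrier G" using rc sc by (intro generate_incl) auto
    show "carrier G \<subseteq> generate G {s, rho}"
      unfolding carr H_eq using rho_gen[of s "{s, rho}"] by (auto intro: generate.eng generate.incl)
  qed
  have fsc: "\<phi> s (fps_const a) = fps_const (cnj a)" for a using aut[OF sc] sl by (simp add: aut_const Ef_nlin)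
  have frc: "\<phi> rho (fps_const a) = fps_const a" for a using aut[OF rc(1)] rc by (simp add: aut_const Ef_lin)
  define v where "v = \<phi> s w0"
  have as: "real_fps_aut (\<phi> s)" using aut[OF sc] .
  have ar: "real_fps_aut (\<phi> rho)" using aut[OF rc(1)] .
  have v0: "v $ 0 = 0" unfolding v_def using w0_0 by (simp add: aut_nth01(1)[OF as] Ef_zero)
  have v1: "v $ 1 = of_nat nH * L s" unfolding v_def L_def using w0_1 aut_nth01(2)[OF as, of w0] sl
    by (simp add: Ef_nlin L_def)
  have vv: "\<phi> s v = w0" unfolding v_def using phi_app[OF sc sc, of w0] ss by (simp add: phi_one)
  have ir: "\<phi> (inv rho) w0 = fps_const (cnj xi) * w0"
  proof -
    have ai: "real_fps_aut (\<phi> (inv rho))" using aut rc by simp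
    have li: "lin (inv rho)" using rc by (simp add: lin_inv)
    have "w0 = \<phi> (inv rho \<otimes> rho) w0" using rc by (simp add: phi_one)
    also have "\<dots> = fps_const xi * \<phi> (inv rho) w0" using rc li
      by (simp only: phi_app[OF inv_closed[OF rc(1)] rc(1)] w0_rho aut_mult[OF ai] aut_const[OF ai] Ef_lin[OF li])
    finally have "fps_const (cnj xi) * w0 = (fps_const (cnj xi) * fps_const xi) * \<phi> (inv rho) w0"
      by (metis mult.assoc)
    also have "fps_const (cnj xi) * fps_const xi = (1 :: complex fps)"
      by (simp only: fps_const_mult xi_cnj' fps_const_1_eq_1)
    finally show ?thesis by simp
  qed
  have rv: "\<phi> rho v = fps_const xi * v"
  proof -
    have "\<phi> rho v = \<phi> (rho \<otimes> s) w0" unfolding v_def using rc sc by (simp add: phi_app)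
    also have "\<dots> = \<phi> s (\<phi> (inv rho) w0)" unfolding rs using rc sc by (simp add: phi_app)
    also have "\<dots> = fps_const xi * v" unfolding ir v_def by (simp add: aut_mult[OF as] fsc)
    finally show ?thesis .
  qed
  have n0: "(of_nat nH :: complex) \<noteq> 0" using nH_pos by simp
  have "\<exists>w. local_parameter w \<and> \<phi> s w = w \<and> \<phi> rho w = fps_const xi * w"
  proof (cases "(w0 + v) $ 1 = 0")
    case False
    show ?thesis
    proof (intro exI conjI)
      show "local_parameter (w0 + v)" using False w0_0 v0 by (intro local_param) auto
      show "\<phi> s (w0 + v) = w0 + v" using vv by (simp add: aut_add[OF as] v_def)
      show "\<phi> rho (w0 + v) = fps_const xi * (w0 + v)" by (simp add: aut_add[OF ar] rv w0_rho algebra_simps)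
    qed
  next
    case True
    then have "of_nat nH * (1 + L s) = 0" using w0_1 v1 by (simp add: algebra_simps)
    then have Ls: "L s = -1" using n0 by (simp add: add_eq_0_iff2 minus_equation_iff[of "L s"])
    show ?thesis
    proof (intro exI conjI)
      have "(fps_const \<i> * (w0 - v)) $ 1 = \<i> * (2 * of_nat nH)" using w0_1 v1 Ls by simp
      then show "local_parameter (fps_const \<i> * (w0 - v))" using n0 w0_0 v0 by (intro local_param) auto
      have "\<phi> s (fps_const \<i> * (w0 - v)) = fps_const (- \<i>) * (v - w0)"
        by (simp add: aut_mult[OF as] aut_diff[OF as] fsc vv v_def[symmetric])
      also have "\<dots> = fps_const \<i> * (w0 - v)" by (simp flip: fps_const_neg add: algebra_simps)
      finally show "\<phi> s (fps_const \<i> * (w0 - v)) = fps_const \<i> * (w0 - v)" .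
      show "\<phi> rho (fps_const \<i> * (w0 - v)) = fps_const xi * (fps_const \<i> * (w0 - v))"
        by (simp add: aut_mult[OF ar] aut_diff[OF ar] frc rv w0_rho algebra_simps)
    qed
  qed
  then obtain w where w: "local_parameter w" "\<phi> s w = w" "\<phi> rho w = fps_const xi * w" by blast
  have xe: "fps_const (exp (2 * pi * \<i> / of_nat nH)) = fps_const xi" by (simp only: xi_exp)
  show ?thesis
    apply (rule exI[of _ nH], rule bexI[of _ s], rule bexI[of _ rho], rule exI[of _ w])
    apply (unfold xe)
    using nH_pos ord gen s2 rho_n conj w fsc frc sc rc by auto
qed

end
theorem proposition6p1:
  fixes G (structure) and \<phi> :: "'g \<Rightarrow> complex fps \<Rightarrow> complex fps"
  assumes "group G" and "finite (carrier G)"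
    and "\<And>g. g \<in> carrier G \<Longrightarrow> real_fps_aut (\<phi> g)"
    and "\<And>g h. g \<in> carrier G \<Longrightarrow> h \<in> carrier G \<Longrightarrow> \<phi> (g \<otimes> h) = \<phi> g \<circ> \<phi> h"
    and "inj_on \<phi> (carrier G)"
  shows "((\<forall>g \<in> carrier G. complex_linear_fps (\<phi> g)) \<and>
           (\<exists>n::nat. \<exists>\<rho> \<in> carrier G. \<exists>w.
              n \<ge> 1 \<and> order G = n \<and> generate G {\<rho>} = carrier G \<and> \<rho> [^] n = \<one> \<and>
              local_parameter w \<and>
              \<phi> \<rho> w = fps_const (exp (2 * pi * \<i> / of_nat n)) * w))
       \<or> ((\<not> (\<forall>g \<in> carrier G. complex_linear_fps (\<phi> g))) \<and>
           (\<exists>n::nat. \<exists>\<sigma> \<in> carrier G. \<exists>\<rho> \<in> carrier G. \<exists>w.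
              n \<ge> 1 \<and> order G = 2 * n \<and> generate G {\<sigma>, \<rho>} = carrier G \<and>
              \<sigma> [^] (2::nat) = \<one> \<and> \<rho> [^] n = \<one> \<and>
              \<sigma> \<otimes> \<rho> \<otimes> inv \<sigma> = inv \<rho> \<and>
              local_parameter w \<and>
              (\<forall>\<alpha>. \<phi> \<sigma> (fps_const \<alpha>) = fps_const (cnj \<alpha>)) \<and> \<phi> \<sigma> w = w \<and>
              (\<forall>\<alpha>. \<phi> \<rho> (fps_const \<alpha>) = fps_const \<alpha>) \<and>
              \<phi> \<rho> w = fps_const (exp (2 * pi * \<i> / of_nat n)) * w))"
proof -
  interpret P6 G \<phi> using assms by (intro P6.intro P6_axioms.intro) auto
  have cl: "complex_linear_fps (\<phi> g) \<longleftrightarrow> lin g" if "g \<in> carrier G" for g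
    using clin_iff[OF aut[OF that]] by (simp add: lin_def)
  show ?thesis
  proof (cases "\<forall>g\<in>carrier G. lin g")
    case True
    then show ?thesis using caseA cl by blast
  next
    case False
    then obtain s where s: "s \<in> carrier G" "\<not> lin s" by blast
    then have "\<not> (\<forall>g \<in> carrier G. complex_linear_fps (\<phi> g))" using cl by blast
    then show ?thesis using caseB[OF s] by blast
  qed
qed

end
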